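(* Let $P$ be a saturated toric sharp monoid, let $v_1,\dots,v_d$ be the first lattice points on the $d$ extremal rays of the dual cone $C(P)^{\vee}$, let $F(P)$ be the free monoid on $v_1,\dots,v_d$, and let $i:P\rightarrow F(P)$ be the morphism $p\mapsto (v_1(p),\dots,v_d(p))$. Then $i$ is exact. Moreover, for any exact morphism $i':P\rightarrow F$ to a free monoid $F$ of rank $d$, there is a unique monoid morphism $j:F(P)\rightarrow F$ such that $i'=j\circ i$.
   Context: A saturated toric sharp monoid is a finitely generated, integral, saturated monoid $P$ with no nontrivial units and with $P^{gp}$ torsion-free. $C(P)$ denotes the rational polyhedral cone generated by $P$ in $P^{gp}\otimes\mathbb{Q}$, and $C(P)^{\vee}\subset \mathrm{Hom}(P^{gp},\mathbb{Q})$ its dual cone; lattice points of $C(P)^{\vee}$ are elements of $\mathrm{Hom}(P^{gp},\mathbb{Z})$ lying in it. A morphism $f:P\rightarrow Q$ of integral monoids is exact if the square formed by $f$, $f^{gp}:P^{gp}\to Q^{gp}$ and the inclusions $P\to P^{gp}$, $Q\to Q^{gp}$ is cartesian as a diagram of sets, i.e. $P=(f^{gp})^{-1}(Q)$. *)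

theory Defs
  imports "HOL-Analysis.Analysis"
begin

text \<open>A monoid P with P^gp torsion-free of rank n is represented, up to isomorphism,
  as a submonoid of the lattice int^'n which generates int^'n as a group;
  then P^gp = int^'n and Hom(P^gp, Z) = int^'n via the standard pairing.\<close>

definition ipair :: "int^'n::finite \<Rightarrow> int^'n \<Rightarrow> int" where
  "ipair v p = (\<Sum>k\<in>UNIV. v$k * p$k)"

definition qpair :: "rat^'n::finite \<Rightarrow> rat^'n \<Rightarrow> rat" where
  "qpair u x = (\<Sum>k\<in>UNIV. u$k * x$k)"

definition ratv :: "int^'n::finite \<Rightarrow> rat^'n" where
  "ratv p = (\<chi> k. of_int (p$k))"

definition submonoid :: "(int^'n::finite) set \<Rightarrow> bool" where
  "submonoid P \<longleftrightarrow> 0 \<in> P \<and> (\<forall>p\<in>P. \<forall>q\<in>P. p + q \<in> P)"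

definition fin_gen :: "(int^'n::finite) set \<Rightarrow> bool" where
  "fin_gen P \<longleftrightarrow> (\<exists>G. finite G \<and> G \<subseteq> P \<and>
      (\<forall>p\<in>P. \<exists>c :: int^'n \<Rightarrow> nat. p = (\<Sum>g\<in>G. of_nat (c g) *s g)))"

definition gen_lattice :: "(int^'n::finite) set \<Rightarrow> bool" where
  "gen_lattice P \<longleftrightarrow> (\<forall>x. \<exists>p\<in>P. \<exists>q\<in>P. x = p - q)"

definition sharp :: "(int^'n::finite) set \<Rightarrow> bool" where
  "sharp P \<longleftrightarrow> (\<forall>p\<in>P. - p \<in> P \<longrightarrow> p = 0)"

definition saturated :: "(int^'n::finite) set \<Rightarrow> bool" where
  "saturated P \<longleftrightarrow> (\<forall>x. \<forall>m::nat. m > 0 \<and> of_nat m *s x \<in> P \<longrightarrow> x \<in> P)"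

definition sat_toric_sharp :: "(int^'n::finite) set \<Rightarrow> bool" where
  "sat_toric_sharp P \<longleftrightarrow> submonoid P \<and> fin_gen P \<and> gen_lattice P \<and> sharp P \<and> saturated P"

definition cone_of :: "(int^'n::finite) set \<Rightarrow> (rat^'n) set" where
  "cone_of P = {x. \<exists>S a. finite S \<and> S \<subseteq> P \<and> (\<forall>s\<in>S. a s \<ge> (0::rat)) \<and>
                     x = (\<Sum>s\<in>S. a s *s ratv s)}"

definition dual_cone :: "(rat^'n::finite) set \<Rightarrow> (rat^'n) set" where
  "dual_cone C = {u. \<forall>x\<in>C. qpair u x \<ge> 0}"

definition extremal_ray :: "(rat^'n::finite) set \<Rightarrow> (rat^'n) set \<Rightarrow> bool" where
  "extremal_ray C R \<longleftrightarrow> (\<exists>u. u \<noteq> 0 \<and> R = {t *s u | t. t \<ge> 0}) \<and> R \<subseteq> C \<and>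
     (\<forall>a\<in>C. \<forall>b\<in>C. a + b \<in> R \<longrightarrow> a \<in> R \<and> b \<in> R)"

definition first_lattice_point :: "(rat^'n::finite) set \<Rightarrow> int^'n \<Rightarrow> bool" where
  "first_lattice_point R v \<longleftrightarrow> v \<noteq> 0 \<and> ratv v \<in> R \<and>
     (\<forall>w. w \<noteq> 0 \<and> ratv w \<in> R \<longrightarrow> (\<exists>t::rat. t \<ge> 1 \<and> ratv w = t *s ratv v))"

definition ray_generators :: "(int^'n::finite) set \<Rightarrow> (int^'n) set" where
  "ray_generators P = {v. \<exists>R. extremal_ray (dual_cone (cone_of P)) R \<and> first_lattice_point R v}"

text \<open>The free monoid N^d, as functions nat => nat supported in {..<d}.\<close>
definition nvec :: "nat \<Rightarrow> (nat \<Rightarrow> nat) set" where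
  "nvec d = {x. \<forall>k\<ge>d. x k = 0}"

definition mon_hom :: "(int^'n::finite) set \<Rightarrow> nat \<Rightarrow> (int^'n \<Rightarrow> nat \<Rightarrow> nat) \<Rightarrow> bool" where
  "mon_hom P d f \<longleftrightarrow> (\<forall>p\<in>P. f p \<in> nvec d) \<and> f 0 = (\<lambda>k. 0) \<and>
     (\<forall>p\<in>P. \<forall>q\<in>P. f (p + q) = (\<lambda>k. f p k + f q k))"

definition free_hom :: "nat \<Rightarrow> nat \<Rightarrow> ((nat \<Rightarrow> nat) \<Rightarrow> nat \<Rightarrow> nat) \<Rightarrow> bool" where
  "free_hom d e j \<longleftrightarrow> (\<forall>x\<in>nvec d. j x \<in> nvec e) \<and> j (\<lambda>k. 0) = (\<lambda>k. 0) \<and>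
     (\<forall>x\<in>nvec d. \<forall>y\<in>nvec d. j (\<lambda>k. x k + y k) = (\<lambda>k. j x k + j y k))"

text \<open>Exactness: P = (f^gp)^{-1}(N^d). Every element of P^gp is p - q with p,q in P,
  and f^gp(p - q) = f p - f q; this lies in N^d iff f q <= f p componentwise.\<close>
definition exact_hom :: "(int^'n::finite) set \<Rightarrow> (int^'n \<Rightarrow> nat \<Rightarrow> nat) \<Rightarrow> bool" where
  "exact_hom P f \<longleftrightarrow> (\<forall>p\<in>P. \<forall>q\<in>P. (\<forall>k. f q k \<le> f p k) \<longrightarrow> p - q \<in> P)"

end

theory Submission
  imports Defs
begin

lemma qpair_add1[simp]: "qpair (a + b) x = qpair a x + qpair b x"
  by (simp add: qpair_def distrib_right sum.distrib)
lemma qpair_add2[simp]: "qpair u (x + y) = qpair u x + qpair u y"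
  by (simp add: qpair_def distrib_left sum.distrib)
lemma qpair_diff1[simp]: "qpair (a - b) x = qpair a x - qpair b x"
  by (simp add: qpair_def left_diff_distrib sum_subtractf)
lemma qpair_diff2[simp]: "qpair u (x - y) = qpair u x - qpair u y"
  by (simp add: qpair_def right_diff_distrib sum_subtractf)
lemma qpair_neg1[simp]: "qpair (- a) x = - qpair a x"
  by (simp add: qpair_def sum_negf)
lemma qpair_smult1[simp]: "qpair (c *s a) x = c * qpair a x"
  by (simp add: qpair_def sum_distrib_left mult.assoc)
lemma qpair_smult2[simp]: "qpair u (c *s x) = c * qpair u x"
  by (simp add: qpair_def sum_distrib_left algebra_simps)
lemma qpair_zero1[simp]: "qpair 0 x = 0" by (simp add: qpair_def)
lemma qpair_zero2[simp]: "qpair u 0 = 0" by (simp add: qpair_def)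
lemma qpair_sum1: "qpair (\<Sum>i\<in>S. f i) x = (\<Sum>i\<in>S. qpair (f i) x)"
  by (induct S rule: infinite_finite_induct) auto
lemma qpair_sum2: "qpair u (\<Sum>i\<in>S. f i) = (\<Sum>i\<in>S. qpair u (f i))"
  by (induct S rule: infinite_finite_induct) auto
lemma qpair_self_pos: "u \<noteq> 0 \<Longrightarrow> qpair u u > 0"
proof -
  assume "u \<noteq> 0"
  then obtain k where k: "u$k \<noteq> 0" by (auto simp: vec_eq_iff)
  have "qpair u u = (\<Sum>j\<in>UNIV. u$j * u$j)" by (simp add: qpair_def)
  also have "\<dots> > 0"
    by (rule sum_pos2[where i=k]) (use k in \<open>auto simp: zero_less_mult_iff\<close>)
  finally show ?thesis .
qed

lemma ipair_add1[simp]: "ipair (a + b) x = ipair a x + ipair b x"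
  by (simp add: ipair_def distrib_right sum.distrib)
lemma ipair_add2[simp]: "ipair u (x + y) = ipair u x + ipair u y"
  by (simp add: ipair_def distrib_left sum.distrib)
lemma ipair_diff1[simp]: "ipair (a - b) x = ipair a x - ipair b x"
  by (simp add: ipair_def left_diff_distrib sum_subtractf)
lemma ipair_diff2[simp]: "ipair u (x - y) = ipair u x - ipair u y"
  by (simp add: ipair_def right_diff_distrib sum_subtractf)
lemma ipair_smult1[simp]: "ipair (c *s a) x = c * ipair a x"
  by (simp add: ipair_def sum_distrib_left mult.assoc)
lemma ipair_smult2[simp]: "ipair u (c *s x) = c * ipair u x"
  by (simp add: ipair_def sum_distrib_left algebra_simps)
lemma ipair_zero2[simp]: "ipair u 0 = 0" by (simp add: ipair_def)
lemma ipair_zero1[simp]: "ipair 0 x = 0" by (simp add: ipair_def)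
lemma ipair_sum1: "ipair (\<Sum>i\<in>S. f i) x = (\<Sum>i\<in>S. ipair (f i) x)"
  by (induct S rule: infinite_finite_induct) auto
lemma ipair_sum2: "ipair u (\<Sum>i\<in>S. f i) = (\<Sum>i\<in>S. ipair u (f i))"
  by (induct S rule: infinite_finite_induct) auto
lemma ipair_axis: "ipair u (axis j 1) = u$j"
proof -
  have "ipair u (axis j 1) = (\<Sum>k\<in>UNIV. if k = j then u$j else 0)"
    unfolding ipair_def by (rule sum.cong) (auto simp: axis_def)
  then show ?thesis by simp
qed

lemma ratv_add[simp]: "ratv (a + b) = ratv a + ratv b" by (simp add: ratv_def vec_eq_iff)
lemma ratv_diff[simp]: "ratv (a - b) = ratv a - ratv b" by (simp add: ratv_def vec_eq_iff)
lemma ratv_neg[simp]: "ratv (- b) = - ratv b" by (simp add: ratv_def vec_eq_iff)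
lemma ratv_zero[simp]: "ratv 0 = 0" by (simp add: ratv_def vec_eq_iff)
lemma ratv_smult[simp]: "ratv (c *s a) = of_int c *s ratv a" by (simp add: ratv_def vec_eq_iff)
lemma ratv_sum: "ratv (\<Sum>i\<in>S. f i) = (\<Sum>i\<in>S. ratv (f i))"
  by (induct S rule: infinite_finite_induct) auto
lemma ratv_inj[simp]: "ratv a = ratv b \<longleftrightarrow> a = b" by (simp add: ratv_def vec_eq_iff)
lemma ratv_eq0[simp]: "ratv a = 0 \<longleftrightarrow> a = 0" using ratv_inj[of a 0] by simp
lemma qpair_ratv: "qpair (ratv v) (ratv p) = of_int (ipair v p)"
  by (simp add: qpair_def ipair_def ratv_def)

definition cone_ix :: "'i set \<Rightarrow> ('i \<Rightarrow> rat^'n::finite) \<Rightarrow> (rat^'n) set" where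
  "cone_ix I f = {x. \<exists>a. (\<forall>i\<in>I. a i \<ge> 0) \<and> x = (\<Sum>i\<in>I. a i *s f i)}"

lemma farkas:
  assumes "finite I"
  shows "x \<notin> cone_ix I f \<Longrightarrow> \<exists>u. (\<forall>i\<in>I. qpair u (f i) \<ge> 0) \<and> qpair u x < 0"
  using assms
proof (induct I arbitrary: f x rule: finite_induct)
  case empty
  then have "x \<noteq> 0" by (auto simp: cone_ix_def)
  then have "qpair (-x) x < 0" using qpair_self_pos[of x] by simp
  then show ?case by (auto intro!: exI[of _ "-x"])
next
  case (insert h I)
  have "x \<notin> cone_ix I f"
  proof
    assume "x \<in> cone_ix I f"
    then obtain a where a: "\<forall>i\<in>I. a i \<ge> 0" "x = (\<Sum>i\<in>I. a i *s f i)" by (auto simp: cone_ix_def)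
    let ?a = "a(h := 0)"
    have "(\<Sum>i\<in>insert h I. ?a i *s f i) = (\<Sum>i\<in>I. ?a i *s f i)"
      using insert by simp
    also have "\<dots> = x" using a insert by (auto intro!: sum.cong)
    finally have "x \<in> cone_ix (insert h I) f" using a
      unfolding cone_ix_def by (auto intro!: exI[of _ ?a])
    with insert show False by simp
  qed
  from insert(3)[OF this] obtain u where u: "\<forall>i\<in>I. qpair u (f i) \<ge> 0" "qpair u x < 0" by blast
  show ?case
  proof (cases "qpair u (f h) \<ge> 0")
    case True then show ?thesis using u by auto
  next
    case False
    define c where "c = qpair u (f h)"
    have c: "c < 0" using False c_def by simp
    define ft where "ft i = f i - (qpair u (f i) / c) *s f h" for i
    define xt where "xt = x - (qpair u x / c) *s f h"
    have "xt \<notin> cone_ix I ft"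
    proof
      assume "xt \<in> cone_ix I ft"
      then obtain a where a: "\<forall>i\<in>I. a i \<ge> 0" "xt = (\<Sum>i\<in>I. a i *s ft i)" by (auto simp: cone_ix_def)
      define S where "S = (\<Sum>i\<in>I. a i * qpair u (f i))"
      have S0: "S \<ge> 0" unfolding S_def using a u by (auto intro!: sum_nonneg)
      define mu where "mu = (qpair u x - S) / c"
      have mu: "mu \<ge> 0" unfolding mu_def using S0 u c
        by (simp add: divide_nonpos_neg)
      have "(\<Sum>i\<in>I. a i *s ft i) = (\<Sum>i\<in>I. a i *s f i) - (S / c) *s f h"
      proof -
        have "(\<Sum>i\<in>I. a i *s ft i) = (\<Sum>i\<in>I. a i *s f i - ((a i * qpair u (f i)) / c) *s f h)"
          by (rule sum.cong) (auto simp: ft_def vec_eq_iff algebra_simps)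
        also have "\<dots> = (\<Sum>i\<in>I. a i *s f i) - (\<Sum>i\<in>I. ((a i * qpair u (f i)) / c) *s f h)"
          by (simp add: sum_subtractf)
        also have "(\<Sum>i\<in>I. ((a i * qpair u (f i)) / c) *s f h) = (S / c) *s f h"
          by (simp add: S_def vec_eq_iff sum_distrib_right sum_divide_distrib)
        finally show ?thesis .
      qed
      then have "xt = (\<Sum>i\<in>I. a i *s f i) - (S / c) *s f h" using a by simp
      then have "x = (\<Sum>i\<in>I. a i *s f i) + mu *s f h"
        unfolding xt_def mu_def using c by (simp add: vec_eq_iff field_simps)
      also have "\<dots> = (\<Sum>i\<in>insert h I. (a(h:=mu)) i *s f i)"
        using insert(1,2) by (simp add: add.commute, intro sum.cong) auto
      finally have "x \<in> cone_ix (insert h I) f" using a mu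
        unfolding cone_ix_def by (auto intro!: exI[of _ "a(h:=mu)"])
      with insert show False by simp
    qed
    from insert(3)[OF this] obtain w where w: "\<forall>i\<in>I. qpair w (ft i) \<ge> 0" "qpair w xt < 0" by blast
    define w' where "w' = w - (qpair w (f h) / c) *s u"
    have "\<forall>i\<in>insert h I. qpair w' (f i) \<ge> 0"
    proof
      fix i assume "i \<in> insert h I"
      then show "qpair w' (f i) \<ge> 0"
      proof
        assume "i = h" then show ?thesis using c by (simp add: w'_def c_def)
      next
        assume "i \<in> I"
        then have "qpair w (ft i) \<ge> 0" using w by auto
        moreover have "qpair w (ft i) = qpair w' (f i)"
          by (simp add: ft_def w'_def field_simps)
        ultimately show ?thesis by simp
      qed
    qed
    moreover have "qpair w' x < 0"
    proof -
      have "qpair w xt = qpair w' x" by (simp add: xt_def w'_def field_simps)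
      then show ?thesis using w by simp
    qed
    ultimately show ?thesis by blast
  qed
qed

lemma clear_denom: "\<exists>N::int. N > 0 \<and> (\<exists>z. ratv z = of_int N *s (y::rat^'n::finite))"
proof -
  define a where "a k = fst (quotient_of (y$k))" for k
  define b where "b k = snd (quotient_of (y$k))" for k
  have bpos: "b k > 0" for k unfolding b_def by (rule quotient_of_denom_pos')
  have yk: "y$k = of_int (a k) / of_int (b k)" for k
    unfolding a_def b_def by (rule quotient_of_div) simp
  define N where "N = (\<Prod>k\<in>UNIV. b k)"
  define z where "z = (\<chi> k. a k * (\<Prod>j\<in>UNIV-{k}. b j))"
  have "N > 0" unfolding N_def using bpos by (simp add: prod_pos)
  moreover have "ratv z = of_int N *s y"
  proof (simp add: vec_eq_iff ratv_def, intro allI)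
    fix k
    have N: "N = b k * (\<Prod>j\<in>UNIV-{k}. b j)" unfolding N_def by (simp add: prod.remove)
    show "rat_of_int (z $ k) = rat_of_int N * y $ k"
      unfolding z_def N yk using bpos[of k] by simp
  qed
  ultimately show ?thesis by blast
qed

lemma ray_change:
  fixes u :: "rat^'n::finite"
  assumes "u \<noteq> 0" "y \<in> {t *s u | t. t \<ge> (0::rat)}" "y \<noteq> 0"
  shows "{t *s u | t. t \<ge> (0::rat)} = {t *s y | t. t \<ge> 0}"
proof -
  obtain s where s: "s \<ge> 0" "y = s *s u" using assms by auto
  have "s \<noteq> 0" using s assms by auto
  then have sp: "s > 0" using s by simp
  show ?thesis
  proof (intro set_eqI iffI)
    fix x assume "x \<in> {t *s u | t. t \<ge> 0}"
    then obtain t where "t \<ge> 0" "x = t *s u" by auto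
    then have "x = (t / s) *s y" "t / s \<ge> 0" using sp s by (auto simp: vector_smult_assoc)
    then show "x \<in> {t *s y | t. t \<ge> 0}" by blast
  next
    fix x assume "x \<in> {t *s y | t. t \<ge> 0}"
    then obtain t where "t \<ge> 0" "x = t *s y" by auto
    then have "x = (t * s) *s u" "t * s \<ge> 0" using sp s by (auto simp: vector_smult_assoc)
    then show "x \<in> {t *s u | t. t \<ge> 0}" by blast
  qed
qed

lemma smult_cancel_rat: "(a::rat) *s x = b *s x \<Longrightarrow> x \<noteq> 0 \<Longrightarrow> a = b"
  by (auto simp: vec_eq_iff)

lemma first_lattice_exists:
  assumes "u \<noteq> (0::rat^'n::finite)"
  shows "\<exists>v. first_lattice_point {t *s u | t. t \<ge> 0} v"
proof -
  let ?R = "{t *s u | t. t \<ge> (0::rat)}"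
  obtain N z where N: "N > (0::int)" "ratv z = of_int N *s u" using clear_denom[of u] by blast
  have "z \<noteq> 0"
  proof
    assume "z = 0"
    then have "of_int N *s u = 0" using N by simp
    then show False using N assms by (auto simp: vec_eq_iff)
  qed
  moreover have "ratv z \<in> ?R" using N by (auto intro!: exI[of _ "of_int N"])
  ultimately have z: "z \<noteq> 0 \<and> ratv z \<in> ?R" by blast
  obtain k where k: "u$k \<noteq> 0" using assms by (auto simp: vec_eq_iff)
  obtain w where w: "w \<noteq> 0 \<and> ratv w \<in> ?R"
    and wmin: "\<forall>w'. w' \<noteq> 0 \<and> ratv w' \<in> ?R \<longrightarrow> nat \<bar>w$k\<bar> \<le> nat \<bar>w'$k\<bar>"
    using ex_has_least_nat[of "\<lambda>w. w \<noteq> 0 \<and> ratv w \<in> ?R" z "\<lambda>w. nat \<bar>w$k\<bar>"] z by blast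
  obtain t where t: "t \<ge> 0" "ratv w = t *s u" using w by auto
  have tp: "t > 0" using t w by (cases "t = 0") auto
  have "\<exists>s\<ge>1. ratv w' = s *s ratv w" if w': "w' \<noteq> 0" "ratv w' \<in> ?R" for w'
  proof -
    obtain t' where t': "t' \<ge> 0" "ratv w' = t' *s u" using w' by auto
    have "nat \<bar>w$k\<bar> \<le> nat \<bar>w'$k\<bar>" using wmin w' by blast
    then have "\<bar>w$k\<bar> \<le> \<bar>w'$k\<bar>" by simp
    then have "\<bar>rat_of_int (w$k)\<bar> \<le> \<bar>rat_of_int (w'$k)\<bar>"
      by (metis of_int_abs of_int_le_iff)
    moreover have "rat_of_int (w$k) = t * u$k" "rat_of_int (w'$k) = t' * u$k"
      using arg_cong[OF t(2), of "\<lambda>x. x$k"] arg_cong[OF t'(2), of "\<lambda>x. x$k"]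
      by (auto simp: ratv_def)
    ultimately have "t * \<bar>u$k\<bar> \<le> t' * \<bar>u$k\<bar>" using t t' by (simp add: abs_mult)
    then have "t \<le> t'" using k by simp
    then have "t' / t \<ge> 1" using tp by simp
    moreover have "ratv w' = (t' / t) *s ratv w" using t t' tp by (simp add: vector_smult_assoc)
    ultimately show ?thesis by blast
  qed
  then show ?thesis using w unfolding first_lattice_point_def by blast
qed

lemma first_lattice_unique:
  assumes "first_lattice_point R v" "first_lattice_point R w"
  shows "v = w"
proof -
  obtain t where t: "t \<ge> 1" "ratv w = t *s ratv v" using assms unfolding first_lattice_point_def by blast
  obtain s where s: "s \<ge> 1" "ratv v = s *s ratv w" using assms unfolding first_lattice_point_def by blast
  have "ratv v = (s * t) *s ratv v" using s t by (simp add: vector_smult_assoc)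
  then have "s * t = 1" using assms(1) smult_cancel_rat[of 1 "ratv v" "s*t"]
    unfolding first_lattice_point_def by simp
  moreover have "t \<le> s * t" using s t by (simp add: mult_le_cancel_right1)
  ultimately have "t = 1" using t by simp
  then show ?thesis using t by simp
qed

lemma qpair_ratv_axis: "qpair u (ratv (axis j 1)) = u$j"
proof -
  have "qpair u (ratv (axis j 1)) = (\<Sum>k\<in>UNIV. if k = j then u$j else 0)"
    unfolding qpair_def ratv_def by (rule sum.cong) (auto simp: axis_def)
  then show ?thesis by simp
qed

locale tor =
  fixes P :: "(int^'n::finite) set" and d :: nat and v :: "nat \<Rightarrow> int^'n"
  assumes sts: "sat_toric_sharp P" and bij: "bij_betw v {..<d} (ray_generators P)"
begin

lemma P0: "0 \<in> P" and Padd: "p \<in> P \<Longrightarrow> q \<in> P \<Longrightarrow> p + q \<in> P"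
  and Psat: "m > 0 \<Longrightarrow> of_nat m *s x \<in> P \<Longrightarrow> x \<in> P"
  and Pgen: "\<exists>p\<in>P. \<exists>q\<in>P. x = p - q"
  using sts unfolding sat_toric_sharp_def submonoid_def saturated_def gen_lattice_def by blast+

definition Gs where "Gs = (SOME G. finite G \<and> G \<subseteq> P \<and>
      (\<forall>p\<in>P. \<exists>c :: int^'n \<Rightarrow> nat. p = (\<Sum>g\<in>G. of_nat (c g) *s g)))"

lemma Gs: "finite Gs" "Gs \<subseteq> P" "\<forall>p\<in>P. \<exists>c :: int^'n \<Rightarrow> nat. p = (\<Sum>g\<in>Gs. of_nat (c g) *s g)"
proof -
  have "\<exists>G. finite G \<and> G \<subseteq> P \<and> (\<forall>p\<in>P. \<exists>c :: int^'n \<Rightarrow> nat. p = (\<Sum>g\<in>G. of_nat (c g) *s g))"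
    using sts unfolding sat_toric_sharp_def fin_gen_def by blast
  from someI_ex[OF this] show "finite Gs" "Gs \<subseteq> P" "\<forall>p\<in>P. \<exists>c :: int^'n \<Rightarrow> nat. p = (\<Sum>g\<in>Gs. of_nat (c g) *s g)"
    unfolding Gs_def by blast+
qed

lemma Pnmult: "p \<in> P \<Longrightarrow> of_nat m *s p \<in> P"
proof (induct m)
  case 0 then show ?case using P0 by simp
next
  case (Suc m)
  have "of_nat (Suc m) *s p = p + of_nat m *s p" by (simp add: vector_sadd_rdistrib)
  then show ?case using Suc Padd by simp
qed

lemma Pcomb: "finite S \<Longrightarrow> S \<subseteq> P \<Longrightarrow> (\<Sum>s\<in>S. of_nat (c s) *s s) \<in> P"
  by (induct S rule: finite_induct) (auto simp: P0 Padd Pnmult)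

abbreviation D where "D \<equiv> dual_cone (cone_of P)"

lemma ratv_cone: "p \<in> P \<Longrightarrow> ratv p \<in> cone_of P"
  unfolding cone_of_def by (rule CollectI, rule exI[of _ "{p}"], rule exI[of _ "\<lambda>_. 1"]) simp

lemma Gs_P: "(\<forall>g\<in>Gs. qpair u (ratv g) \<ge> 0) \<Longrightarrow> p \<in> P \<Longrightarrow> qpair u (ratv p) \<ge> 0"
proof -
  assume g: "\<forall>g\<in>Gs. qpair u (ratv g) \<ge> 0" and p: "p \<in> P"
  obtain c :: "int^'n \<Rightarrow> nat" where c: "p = (\<Sum>g\<in>Gs. of_nat (c g) *s g)" using Gs(3) p by blast
  have "qpair u (ratv p) = (\<Sum>g\<in>Gs. of_nat (c g) * qpair u (ratv g))"
    unfolding c by (simp add: ratv_sum qpair_sum2)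
  also have "\<dots> \<ge> 0" using g by (auto intro!: sum_nonneg)
  finally show ?thesis .
qed

lemma Gs_P0: "(\<forall>g\<in>Gs. qpair u (ratv g) = 0) \<Longrightarrow> p \<in> P \<Longrightarrow> qpair u (ratv p) = 0"
proof -
  assume g: "\<forall>g\<in>Gs. qpair u (ratv g) = 0" and p: "p \<in> P"
  obtain c :: "int^'n \<Rightarrow> nat" where c: "p = (\<Sum>g\<in>Gs. of_nat (c g) *s g)" using Gs(3) p by blast
  have "qpair u (ratv p) = (\<Sum>g\<in>Gs. of_nat (c g) * qpair u (ratv g))"
    unfolding c by (simp add: ratv_sum qpair_sum2)
  also have "\<dots> = 0" using g by simp
  finally show ?thesis .
qed

lemma D_P: "u \<in> D \<Longrightarrow> p \<in> P \<Longrightarrow> qpair u (ratv p) \<ge> 0"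
  using ratv_cone unfolding dual_cone_def by blast

lemma D_iff: "u \<in> D \<longleftrightarrow> (\<forall>g\<in>Gs. qpair u (ratv g) \<ge> 0)"
proof
  assume "u \<in> D" then show "\<forall>g\<in>Gs. qpair u (ratv g) \<ge> 0" using D_P Gs(2) by blast
next
  assume g: "\<forall>g\<in>Gs. qpair u (ratv g) \<ge> 0"
  show "u \<in> D" unfolding dual_cone_def
  proof (rule CollectI, rule ballI)
    fix x assume "x \<in> cone_of P"
    then obtain S a where S: "finite S" "S \<subseteq> P" "\<forall>s\<in>S. a s \<ge> 0" "x = (\<Sum>s\<in>S. a s *s ratv s)"
      unfolding cone_of_def by blast
    have "qpair u x = (\<Sum>s\<in>S. a s * qpair u (ratv s))" using S by (simp add: qpair_sum2)
    also have "\<dots> \<ge> 0" using S Gs_P[OF g] by (auto intro!: sum_nonneg)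
    finally show "qpair u x \<ge> 0" .
  qed
qed

lemma D_add: "a \<in> D \<Longrightarrow> b \<in> D \<Longrightarrow> a + b \<in> D"
  unfolding dual_cone_def by (auto intro: add_nonneg_nonneg)
lemma D_smult: "a \<in> D \<Longrightarrow> c \<ge> 0 \<Longrightarrow> c *s a \<in> D"
  unfolding dual_cone_def by auto
lemma D_zero: "0 \<in> D" unfolding dual_cone_def by auto
lemma D_sum: "(\<And>i. i \<in> S \<Longrightarrow> f i \<in> D) \<Longrightarrow> sum f S \<in> D"
  by (induct S rule: infinite_finite_induct) (auto simp: D_zero D_add)

lemma orthoP: "(\<forall>p\<in>P. qpair u (ratv p) = 0) \<Longrightarrow> u = 0"
proof -
  assume h: "\<forall>p\<in>P. qpair u (ratv p) = 0"
  have "qpair u (ratv x) = 0" for x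
  proof -
    obtain p q where "p \<in> P" "q \<in> P" "x = p - q" using Pgen by blast
    then show ?thesis using h by simp
  qed
  then show "u = 0" by (metis qpair_ratv_axis vec_eq_iff zero_index)
qed

lemma ortho: "(\<forall>g\<in>Gs. qpair u (ratv g) = 0) \<Longrightarrow> u = 0"
  using orthoP Gs_P0 by blast

lemma iorthoP: "(\<forall>p\<in>P. ipair w p = 0) \<Longrightarrow> w = 0"
proof -
  assume h: "\<forall>p\<in>P. ipair w p = 0"
  have "ipair w x = 0" for x
  proof -
    obtain p q where "p \<in> P" "q \<in> P" "x = p - q" using Pgen by blast
    then show ?thesis using h by simp
  qed
  then show "w = 0" by (metis ipair_axis vec_eq_iff zero_index)
qed

lemma v_gen: "l < d \<Longrightarrow> v l \<in> ray_generators P"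
  using bij unfolding bij_betw_def by auto

lemma v_props: assumes "l < d"
  shows "v l \<noteq> 0" "ratv (v l) \<in> D"
proof -
  obtain R where R: "extremal_ray D R" "first_lattice_point R (v l)"
    using v_gen[OF assms] unfolding ray_generators_def by blast
  then show "v l \<noteq> 0" "ratv (v l) \<in> D" unfolding first_lattice_point_def extremal_ray_def by blast+
qed

lemma v_nonneg: "l < d \<Longrightarrow> p \<in> P \<Longrightarrow> ipair (v l) p \<ge> 0"
proof -
  assume "l < d" "p \<in> P"
  then have "0 \<le> qpair (ratv (v l)) (ratv p)" by (rule D_P[OF v_props(2)])
  then show ?thesis by (simp add: qpair_ratv)
qed

end

context tor begin

definition Rv where "Rv l = {t *s ratv (v l) | t. t \<ge> (0::rat)}"

lemma Rv: assumes "l < d" shows "extremal_ray D (Rv l)" "first_lattice_point (Rv l) (v l)"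
proof -
  obtain R where R: "extremal_ray D R" "first_lattice_point R (v l)"
    using v_gen[OF assms] unfolding ray_generators_def by blast
  obtain u where u: "u \<noteq> 0" "R = {t *s u | t. t \<ge> 0}" using R(1) unfolding extremal_ray_def by blast
  have "R = Rv l" unfolding Rv_def u(2)
    by (rule ray_change) (use u R(2) in \<open>auto simp: first_lattice_point_def\<close>)
  then show "extremal_ray D (Rv l)" "first_lattice_point (Rv l) (v l)" using R by auto
qed

lemma v_on_ray: assumes "l < d" "l' < d" "ratv (v l') \<in> Rv l" shows "l' = l"
proof -
  have "Rv l = Rv l'" unfolding Rv_def
    by (rule ray_change) (use assms v_props[of l] v_props[of l'] in \<open>auto simp: Rv_def\<close>)
  then have "v l = v l'" using Rv[OF assms(1)] Rv[OF assms(2)] first_lattice_unique by metis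
  then show ?thesis using bij assms unfolding bij_betw_def inj_on_def by auto
qed

lemma sum_single_smult:
  assumes "l < d"
  shows "(\<Sum>l'<d. (if l' = l then c else 0) *s (f l' :: rat^'n)) = c *s f l"
proof -
  have "(\<Sum>l'<d. (if l' = l then c else 0) *s f l') = (\<Sum>l'<d. if l' = l then c *s f l else 0)"
    by (rule sum.cong) auto
  then show ?thesis using assms by simp
qed

definition Nz where "Nz u = {g\<in>Gs. qpair u (ratv g) \<noteq> 0}"

lemma extremal_case:
  assumes uD: "u \<in> D" and u0: "u \<noteq> 0"
    and ext: "\<forall>w. (\<forall>g\<in>Gs. qpair u (ratv g) = 0 \<longrightarrow> qpair w (ratv g) = 0) \<longrightarrow> (\<exists>s. w = s *s u)"
  shows "\<exists>a. (\<forall>l<d. a l \<ge> 0) \<and> u = (\<Sum>l<d. a l *s ratv (v l))"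
proof -
  let ?R = "{t *s u | t. t \<ge> (0::rat)}"
  have neg: "s \<ge> 0" if "s *s u \<in> D" for s
  proof (rule ccontr)
    assume "\<not> s \<ge> 0"
    then have s: "s < 0" by simp
    have "\<forall>g\<in>Gs. qpair u (ratv g) = 0"
    proof
      fix g assume g: "g \<in> Gs"
      have "s * qpair u (ratv g) \<ge> 0" using that g D_iff by auto
      then have "qpair u (ratv g) \<le> 0" using s by (simp add: mult_le_0_iff zero_le_mult_iff)
      moreover have "qpair u (ratv g) \<ge> 0" using uD g D_iff by auto
      ultimately show "qpair u (ratv g) = 0" by simp
    qed
    then show False using ortho u0 by blast
  qed
  have "extremal_ray D ?R"
    unfolding extremal_ray_def
  proof (intro conjI)
    show "\<exists>u'. u' \<noteq> 0 \<and> ?R = {t *s u' | t. t \<ge> 0}" using u0 by blast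
    show "?R \<subseteq> D" using D_smult uD by auto
    show "\<forall>a\<in>D. \<forall>b\<in>D. a + b \<in> ?R \<longrightarrow> a \<in> ?R \<and> b \<in> ?R"
    proof (intro ballI impI)
      fix a b assume a: "a \<in> D" and b: "b \<in> D" and ab: "a + b \<in> ?R"
      obtain t where t: "t \<ge> 0" "a + b = t *s u" using ab by blast
      have "\<forall>g\<in>Gs. qpair u (ratv g) = 0 \<longrightarrow> qpair a (ratv g) = 0 \<and> qpair b (ratv g) = 0"
      proof (intro ballI impI)
        fix g assume g: "g \<in> Gs" "qpair u (ratv g) = 0"
        have "qpair (a + b) (ratv g) = 0" using t g by simp
        moreover have "qpair a (ratv g) \<ge> 0" "qpair b (ratv g) \<ge> 0" using a b g D_iff by auto
        ultimately show "qpair a (ratv g) = 0 \<and> qpair b (ratv g) = 0" by simp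
      qed
      then obtain sa sb where sa: "a = sa *s u" and sb: "b = sb *s u" using ext by meson
      have "sa \<ge> 0" "sb \<ge> 0" using neg a b sa sb by auto
      then show "a \<in> ?R \<and> b \<in> ?R" using sa sb by blast
    qed
  qed
  obtain v0 where v0: "first_lattice_point ?R v0" using first_lattice_exists[OF u0] by blast
  have "v0 \<in> ray_generators P" unfolding ray_generators_def using v0 \<open>extremal_ray D ?R\<close> by blast
  then obtain l where l: "l < d" "v0 = v l" using bij unfolding bij_betw_def by auto
  obtain t0 where t0: "t0 \<ge> 0" "ratv v0 = t0 *s u" using v0 unfolding first_lattice_point_def by blast
  have "t0 \<noteq> 0" using t0 v0 unfolding first_lattice_point_def by auto
  then have "u = (1 / t0) *s ratv (v l)" using t0 l by (simp add: vector_smult_assoc)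
  also have "\<dots> = (\<Sum>l'<d. (if l' = l then 1 / t0 else 0) *s ratv (v l'))"
    using sum_single_smult[OF l(1)] by simp
  finally show ?thesis using t0 by (intro exI[of _ "\<lambda>l'. if l' = l then 1 / t0 else 0"]) auto
qed

lemma Nz_finite: "finite (Nz u)" unfolding Nz_def using Gs(1) by simp

lemma comb2:
  assumes "\<forall>l<d. a1 l \<ge> 0" "u1 = (\<Sum>l<d. a1 l *s ratv (v l))"
    and "\<forall>l<d. a2 l \<ge> 0" "u2 = (\<Sum>l<d. a2 l *s ratv (v l))"
    and "c1 \<ge> 0" "c2 \<ge> 0" "u = c1 *s u1 + c2 *s u2"
  shows "\<exists>a. (\<forall>l<d. a l \<ge> 0) \<and> u = (\<Sum>l<d. a l *s ratv (v l))"
proof -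
  have e1: "c1 *s u1 = (\<Sum>l<d. (c1 * a1 l) *s ratv (v l))"
    using assms(2) by (simp add: sum_cmul[symmetric] vector_smult_assoc)
  have e2: "c2 *s u2 = (\<Sum>l<d. (c2 * a2 l) *s ratv (v l))"
    using assms(4) by (simp add: sum_cmul[symmetric] vector_smult_assoc)
  have "u = (\<Sum>l<d. (c1 * a1 l) *s ratv (v l) + (c2 * a2 l) *s ratv (v l))"
    using assms(7) e1 e2 by (simp add: sum.distrib)
  also have "\<dots> = (\<Sum>l<d. (c1 * a1 l + c2 * a2 l) *s ratv (v l))"
    by (simp add: vector_sadd_rdistrib)
  finally have "u = (\<Sum>l<d. (c1 * a1 l + c2 * a2 l) *s ratv (v l))" .
  moreover have "\<forall>l<d. c1 * a1 l + c2 * a2 l \<ge> 0" using assms by simp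
  ultimately show ?thesis by (intro exI[of _ "\<lambda>l. c1 * a1 l + c2 * a2 l"]) simp
qed


lemma mink: "u \<in> D \<Longrightarrow> \<exists>a. (\<forall>l<d. a l \<ge> 0) \<and> u = (\<Sum>l<d. a l *s ratv (v l))"
proof (induction "card (Nz u)" arbitrary: u rule: less_induct)
  case less
  note uD = less.prems
  show ?case
  proof (cases "u = 0")
    case True then show ?thesis by (intro exI[of _ "\<lambda>_. 0"]) simp
  next
    case u0: False
    show ?thesis
    proof (cases "\<forall>w. (\<forall>g\<in>Gs. qpair u (ratv g) = 0 \<longrightarrow> qpair w (ratv g) = 0) \<longrightarrow> (\<exists>s. w = s *s u)")
      case True then show ?thesis using extremal_case uD u0 by blast
    next
      case False
      then obtain w where wT: "\<forall>g\<in>Gs. qpair u (ratv g) = 0 \<longrightarrow> qpair w (ratv g) = 0"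
        and wn: "\<forall>s. w \<noteq> s *s u" by blast
      have upos: "g \<in> Nz u \<Longrightarrow> qpair u (ratv g) > 0" for g
        using uD D_iff unfolding Nz_def by force
      define r where "r g = qpair w (ratv g) / qpair u (ratv g)" for g
      have "\<exists>g1\<in>Nz u. \<exists>g2\<in>Nz u. r g1 < r g2"
      proof (rule ccontr)
        assume H: "\<not> ?thesis"
        obtain g0 where g0: "g0 \<in> Nz u"
          using ortho u0 unfolding Nz_def by blast
        have "\<forall>g\<in>Gs. qpair (w - r g0 *s u) (ratv g) = 0"
        proof
          fix g assume g: "g \<in> Gs"
          show "qpair (w - r g0 *s u) (ratv g) = 0"
          proof (cases "g \<in> Nz u")
            case True
            then have "r g = r g0" using H g0 by (meson linorder_neqE)
            then show ?thesis using upos[OF True] unfolding r_def by (simp add: field_simps)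
          next
            case False then show ?thesis using g wT unfolding Nz_def by simp
          qed
        qed
        then have "w - r g0 *s u = 0" by (rule ortho)
        then show False using wn by (metis eq_iff_diff_eq_0)
      qed
      then obtain g1 g2 where g12: "g1 \<in> Nz u" "g2 \<in> Nz u" "r g1 < r g2" by blast
      define s where "s = (r g1 + r g2) / 2"
      define w' where "w' = w - s *s u"
      have w'T: "g \<in> Gs \<Longrightarrow> qpair u (ratv g) = 0 \<Longrightarrow> qpair w' (ratv g) = 0" for g
        using wT unfolding w'_def by simp
      have w'r: "g \<in> Nz u \<Longrightarrow> qpair w' (ratv g) = qpair u (ratv g) * (r g - s)" for g
        using upos[of g] unfolding w'_def r_def by (simp add: field_simps)
      define Neg where "Neg = {g\<in>Gs. qpair w' (ratv g) < 0}"
      define Pos where "Pos = {g\<in>Gs. qpair w' (ratv g) > 0}"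
      have NegNz: "Neg \<subseteq> Nz u"
      proof
        fix g assume "g \<in> Neg"
        then have "g \<in> Gs" "qpair w' (ratv g) \<noteq> 0" unfolding Neg_def by auto
        then show "g \<in> Nz u" unfolding Nz_def using w'T by blast
      qed
      have PosNz: "Pos \<subseteq> Nz u"
      proof
        fix g assume "g \<in> Pos"
        then have "g \<in> Gs" "qpair w' (ratv g) \<noteq> 0" unfolding Pos_def by auto
        then show "g \<in> Nz u" unfolding Nz_def using w'T by blast
      qed
      have "r g1 - s < 0" "r g2 - s > 0" using g12(3) unfolding s_def by simp_all
      have "g1 \<in> Gs" "g2 \<in> Gs" using g12 unfolding Nz_def by auto
      have "qpair w' (ratv g1) < 0" unfolding w'r[OF g12(1)]
        using upos[OF g12(1)] \<open>r g1 - s < 0\<close> by (rule mult_pos_neg)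
      then have "g1 \<in> Neg" unfolding Neg_def using \<open>g1 \<in> Gs\<close> by blast
      have "qpair w' (ratv g2) > 0" unfolding w'r[OF g12(2)]
        using upos[OF g12(2)] \<open>r g2 - s > 0\<close> by (rule mult_pos_pos)
      then have "g2 \<in> Pos" unfolding Pos_def using \<open>g2 \<in> Gs\<close> by blast
      have finNeg: "finite Neg" and finPos: "finite Pos" unfolding Neg_def Pos_def using Gs(1) by auto
      define t1 where "t1 = Min ((\<lambda>g. qpair u (ratv g) / - qpair w' (ratv g)) ` Neg)"
      define t2 where "t2 = Min ((\<lambda>g. qpair u (ratv g) / qpair w' (ratv g)) ` Pos)"
      have "t1 \<in> (\<lambda>g. qpair u (ratv g) / - qpair w' (ratv g)) ` Neg"
        unfolding t1_def by (rule Min_in) (use finNeg \<open>g1 \<in> Neg\<close> in auto)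
      then obtain h1 where h1: "h1 \<in> Neg" "t1 = qpair u (ratv h1) / - qpair w' (ratv h1)"
        by blast
      have "t2 \<in> (\<lambda>g. qpair u (ratv g) / qpair w' (ratv g)) ` Pos"
        unfolding t2_def by (rule Min_in) (use finPos \<open>g2 \<in> Pos\<close> in auto)
      then obtain h2 where h2: "h2 \<in> Pos" "t2 = qpair u (ratv h2) / qpair w' (ratv h2)"
        by blast
      have t1le: "g \<in> Neg \<Longrightarrow> t1 \<le> qpair u (ratv g) / - qpair w' (ratv g)" for g
        unfolding t1_def using finNeg by simp
      have t2le: "g \<in> Pos \<Longrightarrow> t2 \<le> qpair u (ratv g) / qpair w' (ratv g)" for g
        unfolding t2_def using finPos by simp
      have t1p: "t1 > 0"
      proof -
        have "qpair u (ratv h1) > 0" using h1(1) NegNz upos by blast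
        moreover have "- qpair w' (ratv h1) > 0" using h1(1) unfolding Neg_def by auto
        ultimately show ?thesis unfolding h1(2) by (rule divide_pos_pos)
      qed
      have t2p: "t2 > 0"
      proof -
        have "qpair u (ratv h2) > 0" using h2(1) PosNz upos by blast
        moreover have "qpair w' (ratv h2) > 0" using h2(1) unfolding Pos_def by auto
        ultimately show ?thesis unfolding h2(2) by (rule divide_pos_pos)
      qed
      define u1 where "u1 = u + t1 *s w'"
      define u2 where "u2 = u - t2 *s w'"
      have uge: "g \<in> Gs \<Longrightarrow> qpair u (ratv g) \<ge> 0" for g using uD D_iff by auto
      have u1D: "u1 \<in> D" unfolding D_iff
      proof
        fix g assume g: "g \<in> Gs"
        show "qpair u1 (ratv g) \<ge> 0"
        proof (cases "g \<in> Neg")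
          case True
          then have "t1 \<le> qpair u (ratv g) / - qpair w' (ratv g)" "qpair w' (ratv g) < 0"
            using t1le unfolding Neg_def by auto
          then have "t1 * (- qpair w' (ratv g)) \<le> qpair u (ratv g)"
            using pos_le_divide_eq[of "- qpair w' (ratv g)" t1 "qpair u (ratv g)"] by linarith
          then show ?thesis unfolding u1_def by simp
        next
          case False
          then have "qpair w' (ratv g) \<ge> 0" using g unfolding Neg_def by auto
          then show ?thesis unfolding u1_def using uge[OF g] t1p by simp
        qed
      qed
      have u2D: "u2 \<in> D" unfolding D_iff
      proof
        fix g assume g: "g \<in> Gs"
        show "qpair u2 (ratv g) \<ge> 0"
        proof (cases "g \<in> Pos")
          case True
          then have "t2 \<le> qpair u (ratv g) / qpair w' (ratv g)" "qpair w' (ratv g) > 0"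
            using t2le unfolding Pos_def by auto
          then have "t2 * qpair w' (ratv g) \<le> qpair u (ratv g)"
            using pos_le_divide_eq[of "qpair w' (ratv g)" t2 "qpair u (ratv g)"] by linarith
          then show ?thesis unfolding u2_def by simp
        next
          case False
          then have "qpair w' (ratv g) \<le> 0" using g unfolding Pos_def by auto
          then have "t2 * qpair w' (ratv g) \<le> 0" using t2p by (simp add: mult_nonneg_nonpos)
          then show ?thesis unfolding u2_def using uge[OF g] by simp
        qed
      qed
      have "Nz u1 \<subseteq> Nz u - {h1}"
      proof
        fix g assume g: "g \<in> Nz u1"
        have "g \<in> Nz u"
        proof (rule ccontr)
          assume "g \<notin> Nz u"
          then have "qpair u (ratv g) = 0" using g unfolding Nz_def by auto
          moreover have "g \<in> Gs" using g unfolding Nz_def by auto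
          ultimately have "qpair w' (ratv g) = 0" using w'T by blast
          then have "qpair u1 (ratv g) = 0" unfolding u1_def using \<open>qpair u (ratv g) = 0\<close> by simp
          then show False using g unfolding Nz_def by auto
        qed
        moreover have "g \<noteq> h1"
        proof
          assume "g = h1"
          have "qpair w' (ratv h1) < 0" using h1 unfolding Neg_def by auto
          then have "qpair u1 (ratv h1) = 0" unfolding u1_def h1(2) by simp
          then show False using g \<open>g = h1\<close> unfolding Nz_def by auto
        qed
        ultimately show "g \<in> Nz u - {h1}" by auto
      qed
      then have "card (Nz u1) \<le> card (Nz u - {h1})" by (intro card_mono) (simp_all add: Nz_finite)
      moreover have "h1 \<in> Nz u" using h1(1) NegNz by blast
      moreover then have "card (Nz u) > 0" using Nz_finite card_gt_0_iff by blast
      ultimately have c1: "card (Nz u1) < card (Nz u)" using Nz_finite by simp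
      have "Nz u2 \<subseteq> Nz u - {h2}"
      proof
        fix g assume g: "g \<in> Nz u2"
        have "g \<in> Nz u"
        proof (rule ccontr)
          assume "g \<notin> Nz u"
          then have "qpair u (ratv g) = 0" using g unfolding Nz_def by auto
          moreover have "g \<in> Gs" using g unfolding Nz_def by auto
          ultimately have "qpair w' (ratv g) = 0" using w'T by blast
          then have "qpair u2 (ratv g) = 0" unfolding u2_def using \<open>qpair u (ratv g) = 0\<close> by simp
          then show False using g unfolding Nz_def by auto
        qed
        moreover have "g \<noteq> h2"
        proof
          assume "g = h2"
          have "qpair w' (ratv h2) > 0" using h2 unfolding Pos_def by auto
          then have "qpair u2 (ratv h2) = 0" unfolding u2_def h2(2) by simp
          then show False using g \<open>g = h2\<close> unfolding Nz_def by auto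
        qed
        ultimately show "g \<in> Nz u - {h2}" by auto
      qed
      then have "card (Nz u2) \<le> card (Nz u - {h2})" by (intro card_mono) (simp_all add: Nz_finite)
      moreover have "h2 \<in> Nz u" using h2(1) PosNz by blast
      moreover then have "card (Nz u) > 0" using Nz_finite card_gt_0_iff by blast
      ultimately have c2: "card (Nz u2) < card (Nz u)" using Nz_finite by simp
      obtain a1 where a1: "\<forall>l<d. a1 l \<ge> 0" "u1 = (\<Sum>l<d. a1 l *s ratv (v l))"
        using less.hyps[OF c1 u1D] by blast
      obtain a2 where a2: "\<forall>l<d. a2 l \<ge> 0" "u2 = (\<Sum>l<d. a2 l *s ratv (v l))"
        using less.hyps[OF c2 u2D] by blast
      have alg: "t2 / (t1 + t2) * (a + t1 * b) + t1 / (t1 + t2) * (a - t2 * b) = a" for a b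
      proof -
        have ne: "t1 + t2 \<noteq> 0" using t1p t2p by simp
        have "t2 / (t1 + t2) * (a + t1 * b) + t1 / (t1 + t2) * (a - t2 * b)
              = (t2 * (a + t1 * b) + t1 * (a - t2 * b)) / (t1 + t2)"
          by (simp add: add_divide_distrib)
        also have "t2 * (a + t1 * b) + t1 * (a - t2 * b) = a * (t1 + t2)" by (simp add: algebra_simps)
        finally show ?thesis using ne by simp
      qed
      have "u = (t2 / (t1 + t2)) *s u1 + (t1 / (t1 + t2)) *s u2"
        unfolding u1_def u2_def vec_eq_iff by (simp only: vector_add_component vector_minus_component
            vector_smult_component alg) simp
      then show ?thesis using comb2[OF a1 a2] t1p t2p by simp
    qed
  qed
qed

end

lemma qpair_comm: "qpair a b = qpair b a"
  unfolding qpair_def by (simp add: mult.commute)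

lemma clear_denoms_set:
  assumes "finite S"
  shows "\<exists>N::int. N > 0 \<and> (\<forall>s\<in>S. of_int N * (f s :: rat) \<in> \<int>)"
  using assms
proof (induct S rule: finite_induct)
  case empty then show ?case by (intro exI[of _ 1]) simp
next
  case (insert x S)
  then obtain N where N: "N > 0" "\<forall>s\<in>S. of_int N * f s \<in> \<int>" by blast
  obtain a b where ab: "quotient_of (f x) = (a, b)" by (cases "quotient_of (f x)")
  have b: "b > 0" using quotient_of_denom_pos[OF ab] .
  have fx: "f x = of_int a / of_int b" using quotient_of_div[OF ab] .
  have "of_int (N * b) * f x = of_int (N * a)" using b unfolding fx by simp
  then have "of_int (N * b) * f x \<in> \<int>" by (metis Ints_of_int)
  moreover have "of_int (N * b) * f s \<in> \<int>" if "s \<in> S" for s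
  proof -
    have "of_int (N * b) * f s = (of_int N * f s) * of_int b" by simp
    then show ?thesis using N(2) that by (metis Ints_mult Ints_of_int)
  qed
  ultimately show ?case using N b by (intro exI[of _ "N * b"]) auto
qed

context tor begin

definition iv where "iv p k = (if k < d then nat (ipair (v k) p) else 0)"

lemma iv_mon: "mon_hom P d iv"
  unfolding mon_hom_def
proof (intro conjI ballI)
  fix p assume "p \<in> P" then show "iv p \<in> nvec d" by (simp add: nvec_def iv_def)
next
  show "iv 0 = (\<lambda>k. 0)" by (rule ext) (simp add: iv_def)
next
  fix p q assume p: "p \<in> P" and q: "q \<in> P"
  show "iv (p + q) = (\<lambda>k. iv p k + iv q k)"
  proof
    fix k show "iv (p + q) k = iv p k + iv q k"
      using v_nonneg[OF _ p, of k] v_nonneg[OF _ q, of k] by (simp add: iv_def nat_add_distrib)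
  qed
qed

lemma cone_int_in_P:
  assumes "ratv x \<in> cone_ix Gs ratv"
  shows "x \<in> P"
proof -
  obtain a where a: "\<forall>g\<in>Gs. a g \<ge> 0" "ratv x = (\<Sum>g\<in>Gs. a g *s ratv g)"
    using assms unfolding cone_ix_def by blast
  obtain N where N: "N > 0" "\<forall>g\<in>Gs. of_int N * a g \<in> \<int>" using clear_denoms_set[OF Gs(1)] by blast
  define c where "c g = nat \<lfloor>of_int N * a g\<rfloor>" for g
  have cg: "of_nat (c g) = of_int N * a g" if "g \<in> Gs" for g
  proof -
    have "of_int N * a g \<in> \<int>" using N(2) that by blast
    then obtain n where n: "of_int N * a g = of_int n" by (auto elim: Ints_cases)
    have "of_int N * a g \<ge> 0" using a(1) that N(1) by simp
    then have "of_int n \<ge> (0::rat)" using n by simp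
    then have "n \<ge> 0" by simp
    then show ?thesis unfolding c_def n by simp
  qed
  have "ratv (N *s x) = (\<Sum>g\<in>Gs. (of_int N * a g) *s ratv g)"
    using a(2) by (simp add: sum_cmul[symmetric] vector_smult_assoc)
  also have "\<dots> = (\<Sum>g\<in>Gs. of_nat (c g) *s ratv g)"
    by (rule sum.cong) (simp_all add: cg)
  also have "\<dots> = ratv (\<Sum>g\<in>Gs. of_nat (c g) *s g)"
    by (simp add: ratv_sum)
  finally have "N *s x = (\<Sum>g\<in>Gs. of_nat (c g) *s g)" by (simp only: ratv_inj)
  then have "of_nat (nat N) *s x \<in> P" using Pcomb[OF Gs(1) Gs(2)] N(1) by simp
  moreover have "nat N > 0" using N(1) by simp
  ultimately show "x \<in> P" using Psat by blast
qed

lemma iv_exact: "exact_hom P iv"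
  unfolding exact_hom_def
proof (intro ballI impI)
  fix p q assume p: "p \<in> P" and q: "q \<in> P" and le: "\<forall>k. iv q k \<le> iv p k"
  define x where "x = p - q"
  have xl: "ipair (v l) x \<ge> 0" if l: "l < d" for l
  proof -
    have "nat (ipair (v l) q) \<le> nat (ipair (v l) p)" using le[rule_format, of l] l by (simp add: iv_def)
    then have "ipair (v l) q \<le> ipair (v l) p" using v_nonneg[OF l q] v_nonneg[OF l p] by simp
    then show ?thesis unfolding x_def by simp
  qed
  have "ratv x \<in> cone_ix Gs ratv"
  proof (rule ccontr)
    assume "ratv x \<notin> cone_ix Gs ratv"
    from farkas[OF Gs(1) this] obtain u where u: "\<forall>g\<in>Gs. qpair u (ratv g) \<ge> 0" "qpair u (ratv x) < 0"
      by blast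
    have "u \<in> D" using u(1) D_iff by blast
    from mink[OF this] obtain a where a: "\<forall>l<d. a l \<ge> 0" "u = (\<Sum>l<d. a l *s ratv (v l))" by blast
    have "qpair u (ratv x) = (\<Sum>l<d. a l * of_int (ipair (v l) x))"
      unfolding a(2) by (simp add: qpair_sum1 qpair_ratv)
    also have "\<dots> \<ge> 0" using a(1) xl by (auto intro!: sum_nonneg)
    finally show False using u(2) by simp
  qed
  then show "p - q \<in> P" using cone_int_in_P x_def by blast
qed

end

definition unitv :: "nat \<Rightarrow> nat \<Rightarrow> nat" where "unitv l = (\<lambda>k. if k = l then 1 else 0)"

lemma unitv_nvec: "l < d \<Longrightarrow> unitv l \<in> nvec d" by (simp add: unitv_def nvec_def)

lemma free_mult:
  assumes "free_hom d e j" "y \<in> nvec d"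
  shows "j (\<lambda>k. m * y k) = (\<lambda>k. m * j y k)"
proof (induct m)
  case 0
  have z: "j (\<lambda>k. 0) = (\<lambda>k. 0)" using assms(1) unfolding free_hom_def by blast
  show ?case using z by simp
next
  case (Suc m)
  have yn: "(\<lambda>k. m * y k) \<in> nvec d" using assms(2) by (simp add: nvec_def)
  have "j (\<lambda>k. Suc m * y k) = j (\<lambda>k. y k + m * y k)" by simp
  also have "\<dots> = (\<lambda>k. j y k + j (\<lambda>k. m * y k) k)"
  proof -
    have A: "\<forall>x\<in>nvec d. \<forall>y\<in>nvec d. j (\<lambda>k. x k + y k) = (\<lambda>k. j x k + j y k)"
      using assms(1) unfolding free_hom_def by blast
    show ?thesis using A[rule_format, OF assms(2) yn] by simp
  qed
  finally show ?case using Suc by simp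
qed

lemma free_expand:
  assumes fj: "free_hom d e j" and x: "x \<in> nvec d"
  shows "j x k = (\<Sum>l<d. x l * j (unitv l) k)"
proof -
  define tr where "tr n = (\<lambda>k. if k < n then x k else 0)" for n
  have trn: "tr n \<in> nvec d" if "n \<le> d" for n using that by (simp add: tr_def nvec_def)
  have H: "n \<le> d \<Longrightarrow> j (tr n) = (\<lambda>k. \<Sum>l<n. x l * j (unitv l) k)" for n
  proof (induct n)
    case 0
    have "tr 0 = (\<lambda>k. 0)" by (simp add: tr_def)
    moreover have z: "j (\<lambda>k. 0) = (\<lambda>k. 0)" using fj unfolding free_hom_def by blast
    ultimately show ?case by simp
  next
    case (Suc n)
    have eq: "tr (Suc n) = (\<lambda>k. tr n k + (\<lambda>k. x n * unitv n k) k)"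
      by (rule ext) (auto simp: tr_def unitv_def less_Suc_eq)
    have u: "(\<lambda>k. x n * unitv n k) \<in> nvec d" using Suc(2) by (simp add: nvec_def unitv_def)
    have A: "\<forall>x\<in>nvec d. \<forall>y\<in>nvec d. j (\<lambda>k. x k + y k) = (\<lambda>k. j x k + j y k)"
      using fj unfolding free_hom_def by blast
    have trn': "tr n \<in> nvec d" using Suc(2) trn by simp
    have step: "j (tr (Suc n)) = (\<lambda>k. j (tr n) k + j (\<lambda>k. x n * unitv n k) k)"
      unfolding eq by (rule A[rule_format, OF trn' u])
    have m: "j (\<lambda>k. x n * unitv n k) = (\<lambda>k. x n * j (unitv n) k)"
      by (rule free_mult[OF fj unitv_nvec]) (use Suc(2) in simp)
    have ih: "j (tr n) = (\<lambda>k. \<Sum>l<n. x l * j (unitv l) k)" using Suc by simp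
    show ?case unfolding step m ih by (simp add: fun_eq_iff)
  qed
  have "tr d = x" using x by (auto simp: tr_def nvec_def)
  then have "j x = (\<lambda>k. \<Sum>l<d. x l * j (unitv l) k)" using H[of d] by simp
  then show ?thesis by simp
qed

context tor begin

lemma extend_lin:
  fixes f :: "int^'n \<Rightarrow> int"
  assumes add: "\<forall>p\<in>P. \<forall>q\<in>P. f (p + q) = f p + f q"
  shows "\<exists>u. \<forall>p\<in>P. f p = ipair u p"
proof -
  have f0: "f 0 = 0" using add P0 by (metis add.right_neutral add_left_cancel)
  define pq where "pq x = (SOME pq. fst pq \<in> P \<and> snd pq \<in> P \<and> x = fst pq - snd pq)" for x
  have pq: "fst (pq x) \<in> P \<and> snd (pq x) \<in> P \<and> x = fst (pq x) - snd (pq x)" for x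
  proof -
    have "\<exists>pq. fst pq \<in> P \<and> snd pq \<in> P \<and> x = fst pq - snd pq" using Pgen[of x] by auto
    from someI_ex[OF this] show ?thesis unfolding pq_def .
  qed
  define \<phi> where "\<phi> x = f (fst (pq x)) - f (snd (pq x))" for x
  have wd: "\<phi> x = f p - f q" if "p \<in> P" "q \<in> P" "x = p - q" for p q x
  proof -
    let ?p = "fst (pq x)" and ?q = "snd (pq x)"
    have e: "p - q = ?p - ?q" using pq[of x] that(3) by simp
    have "p + ?q = (p - q) + (q + ?q)" by simp
    also have "\<dots> = (?p - ?q) + (q + ?q)" using e by simp
    also have "\<dots> = ?p + q" by (simp add: algebra_simps)
    finally have "p + ?q = ?p + q" .
    then have "f (p + ?q) = f (?p + q)" by simp
    then have "f p + f ?q = f ?p + f q" using add that pq[of x] by simp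
    then show ?thesis unfolding \<phi>_def by simp
  qed
  have padd: "\<phi> (x + y) = \<phi> x + \<phi> y" for x y
  proof -
    obtain p q where pq1: "p \<in> P" "q \<in> P" "x = p - q" using Pgen by blast
    obtain p' q' where pq2: "p' \<in> P" "q' \<in> P" "y = p' - q'" using Pgen by blast
    have "x + y = (p + p') - (q + q')" using pq1 pq2 by simp
    then have "\<phi> (x + y) = f (p + p') - f (q + q')" using wd Padd pq1 pq2 by blast
    also have "\<dots> = \<phi> x + \<phi> y" using add pq1 pq2 wd by simp
    finally show ?thesis .
  qed
  have p0: "\<phi> 0 = 0" using wd[OF P0 P0] by simp
  have pneg: "\<phi> (- x) = - \<phi> x" for x using padd[of x "-x"] p0 by simp
  have pnat: "\<phi> (of_nat m *s x) = of_nat m * \<phi> x" for m x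
  proof (induct m)
    case 0 then show ?case using p0 by simp
  next
    case (Suc m)
    have "of_nat (Suc m) *s x = x + of_nat m *s x" by (simp add: vector_sadd_rdistrib)
    then show ?case using Suc padd by (simp add: algebra_simps)
  qed
  have pint: "\<phi> (c *s x) = c * \<phi> x" for c x
  proof (cases "c \<ge> 0")
    case True
    then have "c = of_nat (nat c)" by simp
    then show ?thesis using pnat[of "nat c" x] by metis
  next
    case False
    then have c: "c = - of_nat (nat (- c))" by simp
    have "c *s x = - (of_nat (nat (- c)) *s x)" by (subst c) (simp add: vector_smult_lneg)
    then show ?thesis using pnat[of "nat (-c)" x] pneg c by (metis mult_minus_left)
  qed
  have psum: "\<phi> (\<Sum>j\<in>S. g j) = (\<Sum>j\<in>S. \<phi> (g j))" if "finite S" for S and g :: "'n \<Rightarrow> int^'n"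
    using that by (induct S rule: finite_induct) (simp_all add: p0 padd)
  define u where "u = (\<chi> j. \<phi> (axis j 1))"
  have lin: "\<phi> x = ipair u x" for x
  proof -
    have "\<phi> x = \<phi> (\<Sum>j\<in>UNIV. x$j *s axis j 1)" by (simp add: basis_expansion)
    also have "\<dots> = (\<Sum>j\<in>UNIV. x$j * \<phi> (axis j 1))" by (simp add: psum pint)
    also have "\<dots> = ipair u x" unfolding ipair_def u_def by (simp add: mult.commute)
    finally show ?thesis .
  qed
  have "f p = ipair u p" if "p \<in> P" for p using wd[OF that P0, of p] f0 lin by simp
  then show ?thesis by blast
qed

lemma Rv_scale: "t \<ge> 0 \<Longrightarrow> t *s ratv (v l) \<in> Rv l" unfolding Rv_def by blast
lemma Rv_self: "ratv (v l) \<in> Rv l" using Rv_scale[of 1 l] by simp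

lemma ray_scale: assumes "c > 0" "c *s y \<in> Rv l" shows "y \<in> Rv l"
proof -
  obtain t where t: "t \<ge> 0" "c *s y = t *s ratv (v l)" using assms unfolding Rv_def by blast
  have "y = (t / c) *s ratv (v l)"
    using t(2) assms(1) by (simp add: vec_eq_iff field_simps)
  then show ?thesis unfolding Rv_def using t assms by auto
qed

lemma ray_unique:
  assumes "l < d" "l' < d" "y \<noteq> 0" "y \<in> Rv l" "y \<in> Rv l'"
  shows "l = l'"
proof -
  have "Rv l = {t *s y | t. t \<ge> 0}" unfolding Rv_def
    by (rule ray_change) (use assms v_props in \<open>auto simp: Rv_def\<close>)
  moreover have "Rv l' = {t *s y | t. t \<ge> 0}" unfolding Rv_def
    by (rule ray_change) (use assms v_props in \<open>auto simp: Rv_def\<close>)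
  ultimately have "Rv l = Rv l'" by simp
  then have "ratv (v l') \<in> Rv l" using Rv_self[of l'] by simp
  then show ?thesis using v_on_ray assms by metis
qed

lemma ext_split:
  assumes l: "l < d" and S: "finite S" "k \<in> S" and fD: "\<forall>s\<in>S. f s \<in> D" and sR: "sum f S \<in> Rv l"
  shows "f k \<in> Rv l"
proof -
  have "sum f S = f k + sum f (S - {k})" using S by (simp add: sum.remove)
  moreover have "f k \<in> D" "sum f (S - {k}) \<in> D" using fD S by (auto intro!: D_sum)
  ultimately show ?thesis using Rv(1)[OF l] sR unfolding extremal_ray_def by metis
qed

lemma int_mult:
  assumes l: "l < d" and w: "ratv w \<in> Rv l"
  shows "\<exists>m::nat. w = int m *s v l"
proof (cases "w = 0")
  case True then show ?thesis by (intro exI[of _ 0]) simp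
next
  case False
  have flp: "first_lattice_point (Rv l) (v l)" using Rv(2)[OF l] .
  obtain t where t: "t \<ge> 1" "ratv w = t *s ratv (v l)"
    using flp False w unfolding first_lattice_point_def by blast
  have vl0: "ratv (v l) \<noteq> 0" using v_props(1)[OF l] by simp
  define f where "f = \<lfloor>t\<rfloor>"
  have "t = of_int f"
  proof (rule ccontr)
    assume ne: "t \<noteq> of_int f"
    have fc: "of_int f \<le> t" "t < of_int f + 1" unfolding f_def using floor_correct[of t] by auto
    have lt: "0 < t - of_int f" "t - of_int f < 1" using fc ne by auto
    define w' where "w' = w - f *s v l"
    have rw': "ratv w' = (t - of_int f) *s ratv (v l)"
      unfolding w'_def using t by (simp add: vec_eq_iff algebra_simps)
    have "w' \<noteq> 0"
    proof
      assume "w' = 0"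
      then have "(t - of_int f) *s ratv (v l) = 0 *s ratv (v l)" using rw' by simp
      then show False using smult_cancel_rat vl0 lt by fastforce
    qed
    moreover have "ratv w' \<in> Rv l" unfolding rw' using lt by (intro Rv_scale) simp
    ultimately obtain t' where t': "t' \<ge> 1" "ratv w' = t' *s ratv (v l)"
      using flp unfolding first_lattice_point_def by blast
    then have "t' = t - of_int f" using rw' smult_cancel_rat vl0 by metis
    then show False using t' lt by simp
  qed
  then have "ratv w = ratv (f *s v l)" using t by simp
  then have "w = f *s v l" by (simp only: ratv_inj)
  moreover have "f \<ge> 0" using t \<open>t = of_int f\<close> by simp
  ultimately show ?thesis by (intro exI[of _ "nat f"]) simp
qed

end

locale tor2 = tor +
  fixes i'
  assumes mh: "mon_hom P d i'" and ex: "exact_hom P i'"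
begin

lemma i'_add: "p \<in> P \<Longrightarrow> q \<in> P \<Longrightarrow> i' (p + q) k = i' p k + i' q k"
  using mh unfolding mon_hom_def by metis
lemma i'_nvec: "p \<in> P \<Longrightarrow> i' p \<in> nvec d" using mh unfolding mon_hom_def by blast

definition U where "U k = (SOME u. \<forall>p\<in>P. int (i' p k) = ipair u p)"

lemma U: "p \<in> P \<Longrightarrow> int (i' p k) = ipair (U k) p"
proof -
  assume p: "p \<in> P"
  have "\<exists>u. \<forall>p\<in>P. int (i' p k) = ipair u p"
    by (rule extend_lin) (simp add: i'_add)
  from someI_ex[OF this] p show ?thesis unfolding U_def by blast
qed

lemma U_D: "ratv (U k) \<in> D"
  unfolding D_iff
proof
  fix g assume "g \<in> Gs"
  then have "g \<in> P" using Gs(2) by blast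
  then show "qpair (ratv (U k)) (ratv g) \<ge> 0" using U[of g k] by (simp add: qpair_ratv)
qed

lemma U_exact: "(\<forall>k<d. ipair (U k) x \<ge> 0) \<Longrightarrow> x \<in> P"
proof -
  assume h: "\<forall>k<d. ipair (U k) x \<ge> 0"
  obtain p q where pq: "p \<in> P" "q \<in> P" "x = p - q" using Pgen by blast
  have "\<forall>k. i' q k \<le> i' p k"
  proof
    fix k show "i' q k \<le> i' p k"
    proof (cases "k < d")
      case True
      then have "ipair (U k) p - ipair (U k) q \<ge> 0" using h pq by simp
      then show ?thesis using U[OF pq(1), of k] U[OF pq(2), of k] by simp
    next
      case False
      then show ?thesis using i'_nvec[OF pq(1)] i'_nvec[OF pq(2)] by (simp add: nvec_def)
    qed
  qed
  then show "x \<in> P" using ex pq unfolding exact_hom_def by blast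
qed

end

context tor2 begin

lemma each_ray: assumes l: "l < d" shows "\<exists>k<d. U k \<noteq> 0 \<and> ratv (U k) \<in> Rv l"
proof -
  have "ratv (v l) \<in> cone_ix {..<d} (\<lambda>k. ratv (U k))"
  proof (rule ccontr)
    assume "ratv (v l) \<notin> cone_ix {..<d} (\<lambda>k. ratv (U k))"
    from farkas[OF _ this] obtain y where
      y: "\<forall>k\<in>{..<d}. qpair y (ratv (U k)) \<ge> 0" "qpair y (ratv (v l)) < 0" by blast
    obtain N z where Nz: "N > (0::int)" "ratv z = of_int N *s y" using clear_denom[of y] by blast
    have "\<forall>k<d. ipair (U k) z \<ge> 0"
    proof (intro allI impI)
      fix k assume "k < d"
      then have "of_int N * qpair y (ratv (U k)) \<ge> 0" using y Nz by simp
      then have "qpair (ratv (U k)) (ratv z) \<ge> 0" using Nz by (simp add: qpair_comm)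
      then show "ipair (U k) z \<ge> 0" by (simp add: qpair_ratv)
    qed
    then have "z \<in> P" by (rule U_exact)
    then have "qpair (ratv (v l)) (ratv z) \<ge> 0" using D_P v_props(2)[OF l] by blast
    moreover have "qpair (ratv (v l)) (ratv z) = of_int N * qpair y (ratv (v l))"
      using Nz by (simp add: qpair_comm)
    moreover have "of_int N * qpair y (ratv (v l)) < 0" using Nz y by (simp add: mult_pos_neg)
    ultimately show False by simp
  qed
  then obtain a where a: "\<forall>k\<in>{..<d}. a k \<ge> 0" "ratv (v l) = (\<Sum>k<d. a k *s ratv (U k))"
    unfolding cone_ix_def by blast
  have "\<exists>k<d. a k *s ratv (U k) \<noteq> 0"
  proof (rule ccontr)
    assume "\<not> ?thesis"
    then have "(\<Sum>k<d. a k *s ratv (U k)) = 0" by (intro sum.neutral) auto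
    then show False using a v_props(1)[OF l] by simp
  qed
  then obtain k where k: "k < d" "a k *s ratv (U k) \<noteq> 0" by blast
  have fD: "\<forall>s\<in>{..<d}. a s *s ratv (U s) \<in> D"
  proof
    fix s assume "s \<in> {..<d}"
    then have "a s \<ge> 0" using a(1) by blast
    then show "a s *s ratv (U s) \<in> D" using U_D D_smult by blast
  qed
  have sR: "(\<Sum>s<d. a s *s ratv (U s)) \<in> Rv l" using a(2) Rv_self[of l] by simp
  have "a k *s ratv (U k) \<in> Rv l"
    by (rule ext_split[OF l finite_lessThan _ fD sR]) (use k in simp)
  moreover have "a k > 0"
  proof -
    have "a k \<ge> 0" using k a(1) by simp
    moreover have "a k \<noteq> 0" using k(2) by (cases "a k = 0") auto
    ultimately show ?thesis by simp
  qed
  ultimately have "ratv (U k) \<in> Rv l" using ray_scale by blast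
  moreover have "U k \<noteq> 0" using k by auto
  ultimately show ?thesis using k by blast
qed

definition sig where "sig l = (SOME k. k < d \<and> U k \<noteq> 0 \<and> ratv (U k) \<in> Rv l)"

lemma sig: "l < d \<Longrightarrow> sig l < d \<and> U (sig l) \<noteq> 0 \<and> ratv (U (sig l)) \<in> Rv l"
  unfolding sig_def by (rule someI_ex) (use each_ray in blast)

lemma sig_inj: "inj_on sig {..<d}"
proof
  fix l l' assume l: "l \<in> {..<d}" and l': "l' \<in> {..<d}" and e: "sig l = sig l'"
  show "l = l'"
    by (rule ray_unique[of l l' "ratv (U (sig l))"]) (use sig[of l] sig[of l'] l l' e in auto)
qed

lemma sig_surj: "sig ` {..<d} = {..<d}"
  by (rule endo_inj_surj) (use sig sig_inj in auto)

definition tau where "tau k = (SOME l. l < d \<and> sig l = k)"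

lemma tau: assumes "k < d" shows "tau k < d" "U k \<noteq> 0" "ratv (U k) \<in> Rv (tau k)"
proof -
  have "\<exists>l. l < d \<and> sig l = k" using sig_surj assms by (metis imageE lessThan_iff)
  then have t: "tau k < d \<and> sig (tau k) = k" unfolding tau_def by (rule someI_ex)
  then show "tau k < d" "U k \<noteq> 0" "ratv (U k) \<in> Rv (tau k)" using sig[of "tau k"] by auto
qed

definition Mu where "Mu k = (SOME m::nat. U k = int m *s v (tau k))"

lemma Mu: assumes k: "k < d" shows "U k = int (Mu k) *s v (tau k)"
proof -
  obtain m where "U k = int m *s v (tau k)" using int_mult[OF tau(1)[OF k] tau(3)[OF k]] by blast
  then have "\<exists>m::nat. U k = int m *s v (tau k)" by blast
  then show ?thesis unfolding Mu_def by (rule someI_ex)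
qed

definition jj where "jj x k = (if k < d then Mu k * x (tau k) else 0)"

lemma jj_free: "free_hom d d jj"
  unfolding free_hom_def
  by (intro conjI ballI) (auto simp: jj_def nvec_def algebra_simps)

lemma jj_fact: assumes p: "p \<in> P" shows "i' p = jj (iv p)"
proof
  fix k show "i' p k = jj (iv p) k"
  proof (cases "k < d")
    case True
    have "int (i' p k) = ipair (U k) p" using U[OF p] .
    also have "\<dots> = int (Mu k) * ipair (v (tau k)) p" using Mu[OF True] by simp
    also have "\<dots> = int (jj (iv p) k)"
      using True tau(1)[OF True] v_nonneg[OF tau(1)[OF True] p] by (simp add: jj_def iv_def)
    finally show ?thesis by simp
  next
    case False
    then show ?thesis using i'_nvec[OF p] by (simp add: jj_def nvec_def)
  qed
qed

lemma jj_unit: "jj (unitv l) k = (if k < d \<and> l = tau k then Mu k else 0)"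
  by (auto simp: jj_def unitv_def)

lemma uniq:
  assumes fj: "free_hom d d j'" and fac: "\<forall>p\<in>P. i' p = j' (iv p)"
  shows "\<forall>x\<in>nvec d. j' x = jj x"
proof -
  have key: "j' (unitv l) k = jj (unitv l) k" if l: "l < d" for l k
  proof (cases "k < d")
    case False
    have "j' (unitv l) \<in> nvec d" using fj unitv_nvec[OF l] unfolding free_hom_def by blast
    then show ?thesis using False by (simp add: jj_def nvec_def)
  next
    case k: True
    define c where "c l' = j' (unitv l') k" for l'
    have ip: "ipair (U k - (\<Sum>l'<d. int (c l') *s v l')) p = 0" if p: "p \<in> P" for p
    proof -
      have "int (i' p k) = int (j' (iv p) k)" using fac p by simp
      also have "j' (iv p) k = (\<Sum>l'<d. iv p l' * c l')"
        unfolding c_def by (rule free_expand[OF fj]) (use iv_mon p in \<open>simp add: mon_hom_def\<close>)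
      finally have "int (i' p k) = (\<Sum>l'<d. int (iv p l') * int (c l'))" by simp
      also have "\<dots> = (\<Sum>l'<d. int (c l') * ipair (v l') p)"
        by (rule sum.cong) (use v_nonneg p in \<open>auto simp: iv_def\<close>)
      finally show ?thesis using U[OF p, of k] by (simp add: ipair_sum1)
    qed
    have "U k - (\<Sum>l'<d. int (c l') *s v l') = 0" by (rule iorthoP) (use ip in blast)
    then have Uk: "U k = (\<Sum>l'<d. int (c l') *s v l')" by simp
    then have rUk: "ratv (U k) = (\<Sum>l'<d. of_nat (c l') *s ratv (v l'))" by (simp add: ratv_sum)
    have c0: "c l' = 0" if l': "l' < d" "l' \<noteq> tau k" for l'
    proof (rule ccontr)
      assume "c l' \<noteq> 0"
      have fD: "\<forall>s\<in>{..<d}. of_nat (c s) *s ratv (v s) \<in> D"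
      proof
        fix s assume "s \<in> {..<d}"
        then have "ratv (v s) \<in> D" using v_props(2) by simp
        then show "of_nat (c s) *s ratv (v s) \<in> D" using D_smult by simp
      qed
      have sR: "(\<Sum>s<d. of_nat (c s) *s ratv (v s)) \<in> Rv (tau k)" using rUk tau(3)[OF k] by simp
      have "of_nat (c l') *s ratv (v l') \<in> Rv (tau k)"
        by (rule ext_split[OF tau(1)[OF k] finite_lessThan _ fD sR]) (use l' in simp)
      moreover have "(of_nat (c l') :: rat) > 0" using \<open>c l' \<noteq> 0\<close> by simp
      ultimately have "ratv (v l') \<in> Rv (tau k)" using ray_scale by blast
      then show False using v_on_ray tau(1)[OF k] l' by blast
    qed
    have "ratv (U k) = (\<Sum>l'<d. (if l' = tau k then of_nat (c (tau k)) else 0) *s ratv (v l'))"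
      unfolding rUk by (rule sum.cong) (auto simp: c0)
    also have "\<dots> = of_nat (c (tau k)) *s ratv (v (tau k))" by (rule sum_single_smult[OF tau(1)[OF k]])
    finally have e1: "ratv (U k) = of_nat (c (tau k)) *s ratv (v (tau k))" .
    have e2: "ratv (U k) = of_nat (Mu k) *s ratv (v (tau k))"
      using arg_cong[OF Mu[OF k], of ratv] by simp
    have "of_nat (c (tau k)) *s ratv (v (tau k)) = of_nat (Mu k) *s ratv (v (tau k))"
      using e1 e2 by metis
    then have "(of_nat (c (tau k)) :: rat) = of_nat (Mu k)"
      using smult_cancel_rat v_props(1)[OF tau(1)[OF k]] by simp
    then have cM: "c (tau k) = Mu k" by simp
    show ?thesis
    proof (cases "l = tau k")
      case True then show ?thesis using cM k by (simp add: jj_unit c_def)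
    next
      case False then show ?thesis using c0[OF l False] k by (simp add: jj_unit c_def)
    qed
  qed
  show ?thesis
  proof
    fix x assume x: "x \<in> nvec d"
    show "j' x = jj x"
    proof
      fix k
      show "j' x k = jj x k"
        using free_expand[OF fj x, of k] free_expand[OF jj_free x, of k] key by simp
    qed
  qed
qed

end

theorem proposition2p2:
  fixes P :: "(int^'n::finite) set" and d :: nat and v :: "nat \<Rightarrow> int^'n"
    and i :: "int^'n \<Rightarrow> nat \<Rightarrow> nat"
  assumes "sat_toric_sharp P"
    and "bij_betw v {..<d} (ray_generators P)"
    and "\<And>p k. i p k = (if k < d then nat (ipair (v k) p) else 0)"
  shows "mon_hom P d i \<and> exact_hom P i \<and>
    (\<forall>i'. mon_hom P d i' \<and> exact_hom P i' \<longrightarrow>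
       (\<exists>j. free_hom d d j \<and> (\<forall>p\<in>P. i' p = j (i p)) \<and>
          (\<forall>j'. free_hom d d j' \<and> (\<forall>p\<in>P. i' p = j' (i p)) \<longrightarrow> (\<forall>x\<in>nvec d. j' x = j x))))"
proof -
  interpret tor P d v using assms(1,2) by unfold_locales
  have ii: "i = iv" using assms(3) by (intro ext) (simp add: iv_def)
  have "\<forall>i'. mon_hom P d i' \<and> exact_hom P i' \<longrightarrow>
       (\<exists>j. free_hom d d j \<and> (\<forall>p\<in>P. i' p = j (iv p)) \<and>
          (\<forall>j'. free_hom d d j' \<and> (\<forall>p\<in>P. i' p = j' (iv p)) \<longrightarrow> (\<forall>x\<in>nvec d. j' x = j x)))"
  proof (intro allI impI)
    fix i' assume h: "mon_hom P d i' \<and> exact_hom P i'"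
    interpret tor2 P d v i' using h by unfold_locales auto
    show "\<exists>j. free_hom d d j \<and> (\<forall>p\<in>P. i' p = j (iv p)) \<and>
          (\<forall>j'. free_hom d d j' \<and> (\<forall>p\<in>P. i' p = j' (iv p)) \<longrightarrow> (\<forall>x\<in>nvec d. j' x = j x))"
      using jj_free jj_fact uniq by (intro exI[of _ jj]) blast
  qed
  then show ?thesis using iv_mon iv_exact ii by simp
qed

end
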